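(* In the setting of the context, for any $t\ge0$, \[ K(t)\le K(0)+Ct+C\varepsilon\,\overline{E}(t)+C\int_0^t\overline{E}(s)\,ds. \]
   Context: Setting: $d\ge1$, $0\le\alpha<1$, $F:\mathbb{R}^d\setminus\{0\}\to\mathbb{R}^d$ with $|F(x)|\le C_F|x|^{-\alpha}$, $|\nabla F(x)|\le C_F|x|^{-1-\alpha}$, $|\nabla^2F(x)|\le C_F|x|^{-2-\alpha}$. $(X_i,V_i)_{i\le N}$ is a classical (collision-free) solution of $\dot X_i=V_i$, $\dot V_i=E(X_i):=\frac1N\sum_{j\ne i}F(X_i-X_j)$. $K(T)=\sup_{t\le T,i}|V_i(t)|$, $R(0)=\sup_i|X_i(0)|$, $\varepsilon=R(0)/N^{1/(2d)}$. $\overline{E}(T)=\sup_{t\in[0,T-\varepsilon],i}\frac1\varepsilon\int_t^{t+\varepsilon}|E(X_i(s))|ds$ if $T\ge\varepsilon$, and $\sup_i\frac1\varepsilon\int_0^T|E(X_i(s))|ds$ if $T<\varepsilon$. $C$ denotes a constant independent of $N$. *)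

theory Defs
  imports "HOL-Analysis.Analysis"
begin

text \<open>Particles are indexed by i in {1..N}; X i t and V i t are position and velocity
  of particle i at time t, taking values in the Euclidean space 'a of dimension d = DIM('a).\<close>

definition field :: "nat \<Rightarrow> ('a::euclidean_space \<Rightarrow> 'a) \<Rightarrow> (nat \<Rightarrow> real \<Rightarrow> 'a) \<Rightarrow> nat \<Rightarrow> real \<Rightarrow> 'a" where
  "field N F X i t = (1 / real N) *\<^sub>R (\<Sum>j\<in>{1..N} - {i}. F (X i t - X j t))"

definition particle_solution ::
  "nat \<Rightarrow> ('a::euclidean_space \<Rightarrow> 'a) \<Rightarrow> (nat \<Rightarrow> real \<Rightarrow> 'a) \<Rightarrow> (nat \<Rightarrow> real \<Rightarrow> 'a) \<Rightarrow> bool" where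
  "particle_solution N F X V \<longleftrightarrow>
     (\<forall>i\<in>{1..N}. \<forall>t\<ge>0.
        (X i has_vector_derivative V i t) (at t within {0..}) \<and>
        (V i has_vector_derivative field N F X i t) (at t within {0..})) \<and>
     (\<forall>i\<in>{1..N}. \<forall>j\<in>{1..N}. i \<noteq> j \<longrightarrow> (\<forall>t\<ge>0. X i t \<noteq> X j t))"

definition Kvel :: "nat \<Rightarrow> (nat \<Rightarrow> real \<Rightarrow> 'a::real_normed_vector) \<Rightarrow> real \<Rightarrow> real" where
  "Kvel N V T = (SUP p\<in>{0..T} \<times> {1..N}. norm (V (snd p) (fst p)))"

definition eps :: "nat \<Rightarrow> (nat \<Rightarrow> real \<Rightarrow> 'a::euclidean_space) \<Rightarrow> real" where
  "eps N X = (SUP i\<in>{1..N}. norm (X i 0)) / (real N powr (1 / (2 * real DIM('a))))"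

definition Ebar :: "nat \<Rightarrow> ('a::euclidean_space \<Rightarrow> 'a) \<Rightarrow> (nat \<Rightarrow> real \<Rightarrow> 'a) \<Rightarrow> real \<Rightarrow> real" where
  "Ebar N F X T =
     (let e = eps N X in
      if T \<ge> e then
        (SUP p\<in>{0..T - e} \<times> {1..N}.
           (1 / e) * integral {fst p..fst p + e} (\<lambda>s. norm (field N F X (snd p) s)))
      else
        (SUP i\<in>{1..N}. (1 / e) * integral {0..T} (\<lambda>s. norm (field N F X i s))))"

end

theory Submission imports Defs begin

definition EB :: "real \<Rightarrow> (nat \<Rightarrow> real \<Rightarrow> real) \<Rightarrow> nat set \<Rightarrow> real \<Rightarrow> real" where
 "EB e g I T = (if T \<ge> e then (SUP p\<in>{0..T-e}\<times>I. (1/e) * integral {fst p..fst p+e} (g (snd p)))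
    else (SUP i\<in>I. (1/e)*integral {0..T} (g i)))"

locale EBloc =
  fixes e :: real and g :: "nat \<Rightarrow> real \<Rightarrow> real" and I :: "nat set"
  assumes e: "e > 0" and fin: "finite I" and ne: "I \<noteq> {}"
    and cont: "\<And>i. i \<in> I \<Longrightarrow> continuous_on {0..} (g i)"
    and nn: "\<And>i s. i \<in> I \<Longrightarrow> s \<ge> 0 \<Longrightarrow> g i s \<ge> 0"
begin

lemma intg: "i \<in> I \<Longrightarrow> 0 \<le> a \<Longrightarrow> g i integrable_on {a..b}"
  by (rule integrable_continuous_interval, rule continuous_on_subset[OF cont]) auto

lemma Gmono: "i \<in> I \<Longrightarrow> 0 \<le> a \<Longrightarrow> a \<le> c \<Longrightarrow> d \<le> b \<Longrightarrow>
   integral {c..d} (g i) \<le> integral {a..b} (g i)"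
  by (rule integral_subset_le) (auto intro: intg nn)

lemma A1:
  assumes "t \<ge> e" "i \<in> I" "0 \<le> p" "p \<le> t - e"
  shows "(1/e) * integral {p..p+e} (g i) \<le> EB e g I t"
proof -
  have "bdd_above ((\<lambda>p. (1/e) * integral {fst p..fst p+e} (g (snd p))) ` ({0..t-e}\<times>I))"
  proof (rule bdd_aboveI2)
    fix q assume q: "q \<in> {0..t-e}\<times>I"
    have "integral {fst q..fst q+e} (g (snd q)) \<le> integral {0..t} (g (snd q))"
      using q by (intro Gmono) auto
    also have "\<dots> \<le> (\<Sum>j\<in>I. integral {0..t} (g j))"
      using q fin by (intro member_le_sum) (auto intro!: integral_nonneg intg nn)
    finally show "(1/e) * integral {fst q..fst q+e} (g (snd q)) \<le> (1/e) * (\<Sum>j\<in>I. integral {0..t} (g j))"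
      using e by (intro mult_left_mono) auto
  qed
  then show ?thesis using assms unfolding EB_def
    by (auto intro!: cSUP_upper2[where x="(p,i)"])
qed

lemma A2:
  assumes "t < e" "i \<in> I"
  shows "(1/e) * integral {0..t} (g i) \<le> EB e g I t"
  using assms fin unfolding EB_def by (auto intro!: cSUP_upper)

lemma EBnn: "t \<ge> 0 \<Longrightarrow> EB e g I t \<ge> 0"
proof -
  assume t: "t \<ge> 0"
  obtain i where i: "i \<in> I" using ne by auto
  show ?thesis
  proof (cases "t \<ge> e")
    case True
    have "0 \<le> (1/e) * integral {0..0+e} (g i)"
      using e i by (intro mult_nonneg_nonneg integral_nonneg intg nn) auto
    also have "\<dots> \<le> EB e g I t" using A1[OF True i, of 0] True e by simp
    finally show ?thesis .
  next
    case False
    have "0 \<le> (1/e) * integral {0..t} (g i)"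
      using e i by (intro mult_nonneg_nonneg integral_nonneg intg nn) auto
    also have "\<dots> \<le> EB e g I t" using A2 False i by auto
    finally show ?thesis .
  qed
qed

lemma EBmono: assumes "0 \<le> s" "s \<le> s'" shows "EB e g I s \<le> EB e g I s'"
proof (cases "s' < e")
  case True
  have "(SUP i\<in>I. (1/e)*integral {0..s} (g i)) \<le> (SUP i\<in>I. (1/e)*integral {0..s'} (g i))"
  proof -
    have "\<forall>i\<in>I. (1/e)*integral {0..s} (g i) \<le> (1/e)*integral {0..s'} (g i)"
      using assms e by (auto intro!: divide_right_mono Gmono)
    then show ?thesis using fin ne by (intro cSUP_mono) auto
  qed
  then show ?thesis using True assms unfolding EB_def by auto
next
  case False
  note F = this
  show ?thesis
  proof (cases "s \<ge> e")
    case True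
    have "EB e g I s = (SUP p\<in>{0..s-e}\<times>I. (1/e) * integral {fst p..fst p+e} (g (snd p)))"
      using True unfolding EB_def by auto
    also have "\<dots> \<le> EB e g I s'"
    proof (intro cSUP_least)
      show "{0..s-e}\<times>I \<noteq> {}" using True ne by auto
      fix q assume "q \<in> {0..s-e}\<times>I"
      then show "(1/e) * integral {fst q..fst q+e} (g (snd q)) \<le> EB e g I s'"
        using A1[of s' "snd q" "fst q"] True assms by auto
    qed
    finally show ?thesis .
  next
    case False
    have "EB e g I s = (SUP i\<in>I. (1/e) * integral {0..s} (g i))"
      using False unfolding EB_def by auto
    also have "\<dots> \<le> EB e g I s'"
    proof (intro cSUP_least ne)
      fix i assume i: "i \<in> I"
      have "(1/e) * integral {0..s} (g i) \<le> (1/e) * integral {0..0+e} (g i)"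
        using e i False by (intro mult_left_mono Gmono) auto
      also have "\<dots> \<le> EB e g I s'" using A1[of s' i 0] F i e by auto
      finally show "(1/e) * integral {0..s} (g i) \<le> EB e g I s'" .
    qed
    finally show ?thesis .
  qed
qed

lemma EBint: "0 \<le> a \<Longrightarrow> EB e g I integrable_on {a..b}"
  by (rule integrable_on_mono_on) (auto simp: mono_on_def intro: EBmono)

lemma main_n:
  assumes i: "i \<in> I"
  shows "0 \<le> t \<Longrightarrow> t < real n * e \<Longrightarrow> integral {0..t} (g i) \<le> e * EB e g I t + integral {0..t} (EB e g I)"
proof (induction n arbitrary: t)
  case 0
  then show ?case using e by auto
next
  case (Suc n)
  show ?case
  proof (cases "t \<ge> e")
    case False
    have "integral {0..t} (g i) = e * ((1/e) * integral {0..t} (g i))" using e by auto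
    also have "\<dots> \<le> e * EB e g I t" using A2[of t i] False i e by (intro mult_left_mono) auto
    also have "0 \<le> integral {0..t} (EB e g I)"
      by (rule integral_nonneg) (auto intro: EBint EBnn)
    ultimately show ?thesis by linarith
  next
    case True
    have ih: "integral {0..t-e} (g i) \<le> e * EB e g I (t-e) + integral {0..t-e} (EB e g I)"
      using Suc True by (intro Suc.IH) (auto simp: algebra_simps)
    have s1: "integral {0..t} (g i) = integral {0..t-e} (g i) + integral {t-e..t} (g i)"
      using Henstock_Kurzweil_Integration.integral_combine[where a=0 and c="t-e" and b=t and f="g i"] True e intg[OF i, of 0 t] by auto
    have s2: "integral {0..t} (EB e g I) = integral {0..t-e} (EB e g I) + integral {t-e..t} (EB e g I)"
      using Henstock_Kurzweil_Integration.integral_combine[where a=0 and c="t-e" and b=t and f="EB e g I"] True e EBint[of 0 t] by auto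
    have w: "integral {t-e..t} (g i) \<le> e * EB e g I t"
    proof -
      have "integral {t-e..t} (g i) = e * ((1/e) * integral {t-e..t-e+e} (g i))" using e by auto
      also have "\<dots> \<le> e * EB e g I t" using A1[of t i "t-e"] True i e by (intro mult_left_mono) auto
      finally show ?thesis .
    qed
    have m: "e * EB e g I (t-e) \<le> integral {t-e..t} (EB e g I)"
    proof -
      have "integral {t-e..t} (\<lambda>_. EB e g I (t-e)) \<le> integral {t-e..t} (EB e g I)"
        using True by (intro integral_le EBint) (auto intro: EBmono)
      then show ?thesis using e by auto
    qed
    show ?thesis using ih s1 s2 w m by linarith
  qed
qed

lemma main:
  assumes i: "i \<in> I" and t: "0 \<le> t"
  shows "integral {0..t} (g i) \<le> e * EB e g I t + integral {0..t} (EB e g I)"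
proof -
  obtain n where "t < real n * e" using e reals_Archimedean3 by blast
  then show ?thesis using main_n[OF i t] by auto
qed
end

theorem lemma2p4:
  fixes F :: "'a::euclidean_space \<Rightarrow> 'a"
    and DF :: "'a \<Rightarrow> 'a \<Rightarrow>\<^sub>L 'a"
    and D2F :: "'a \<Rightarrow> 'a \<Rightarrow>\<^sub>L ('a \<Rightarrow>\<^sub>L 'a)"
    and \<alpha> C_F :: real
  assumes "0 \<le> \<alpha>" and "\<alpha> < 1"
    and "\<forall>x. x \<noteq> 0 \<longrightarrow> norm (F x) \<le> C_F * norm x powr (- \<alpha>)"
    and "\<forall>x. x \<noteq> 0 \<longrightarrow> (F has_derivative blinfun_apply (DF x)) (at x)"
    and "\<forall>x. x \<noteq> 0 \<longrightarrow> norm (DF x) \<le> C_F * norm x powr (- 1 - \<alpha>)"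
    and "\<forall>x. x \<noteq> 0 \<longrightarrow> (DF has_derivative blinfun_apply (D2F x)) (at x)"
    and "\<forall>x. x \<noteq> 0 \<longrightarrow> norm (D2F x) \<le> C_F * norm x powr (- 2 - \<alpha>)"
  shows "\<exists>C. \<forall>N X V t. N \<ge> 1 \<and> particle_solution N F X V \<and> t \<ge> 0 \<longrightarrow>
           Kvel N V t \<le> Kvel N V 0 + C * t + C * eps N X * Ebar N F X t
                          + C * integral {0..t} (\<lambda>s. Ebar N F X s)"
proof (intro exI[of _ 1] allI impI, elim conjE)
  fix N X V t
  assume N: "N \<ge> 1" and ps: "particle_solution N F X V" and t: "(t::real) \<ge> 0"
  define g where "g = (\<lambda>i s. norm (field N F X i s))"
  define I where "I = {1..N}"
  define e where "e = eps N X"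
  have Ebar_eq: "\<And>T. Ebar N F X T = EB e g I T"
    by (simp add: Ebar_def EB_def Let_def e_def g_def I_def)
  have Fc: "\<And>x. x \<noteq> 0 \<Longrightarrow> isCont F x"
    using assms(4) has_derivative_continuous by blast
  have Xd: "\<And>i s. i \<in> I \<Longrightarrow> s \<ge> 0 \<Longrightarrow> (X i has_vector_derivative V i s) (at s within {0..})"
    and Vd: "\<And>i s. i \<in> I \<Longrightarrow> s \<ge> 0 \<Longrightarrow> (V i has_vector_derivative field N F X i s) (at s within {0..})"
    and coll: "\<And>i j s. i \<in> I \<Longrightarrow> j \<in> I \<Longrightarrow> i \<noteq> j \<Longrightarrow> s \<ge> 0 \<Longrightarrow> X i s \<noteq> X j s"
    using ps unfolding particle_solution_def I_def by auto
  have fc: "continuous_on {0..} (field N F X i)" if i: "i \<in> I" for i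
  proof -
    have "continuous (at s within {0..}) (field N F X i)" if s: "s \<in> {0..}" for s
    proof -
      have "continuous (at s within {0..}) (\<lambda>s. F (X i s - X j s))" if j: "j \<in> {1..N} - {i}" for j
      proof (rule continuous_within_compose3[where g=F])
        show "isCont F (X i s - X j s)" using coll[of i j s] i j s by (intro Fc) (auto simp: I_def)
        show "continuous (at s within {0..}) (\<lambda>s. X i s - X j s)"
          using Xd[of i s] Xd[of j s] i j s
          by (intro continuous_diff has_vector_derivative_continuous) (auto simp: I_def)
      qed
      then show ?thesis unfolding field_def
        by (intro continuous_scaleR continuous_const continuous_sum) auto
    qed
    then show ?thesis using continuous_on_eq_continuous_within by blast
  qed
  have gc: "continuous_on {0..} (g i)" if "i \<in> I" for i
    unfolding g_def using fc[OF that] by (intro continuous_on_norm)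
  have gnn: "\<And>i s. 0 \<le> g i s" unfolding g_def by auto
  have gint: "\<And>i a b. i \<in> I \<Longrightarrow> 0 \<le> a \<Longrightarrow> g i integrable_on {a..b}"
    by (rule integrable_continuous_interval, rule continuous_on_subset[OF gc]) auto
  have Vb: "norm (V i s) \<le> norm (V i 0) + integral {0..s} (g i)" if i: "i \<in> I" and s: "0 \<le> s" for i s
  proof -
    have "(field N F X i has_integral V i s - V i 0) {0..s}"
      using s by (intro fundamental_theorem_of_calculus)
        (auto intro: has_vector_derivative_within_subset[OF Vd[OF i]])
    then have eq: "V i s = V i 0 + integral {0..s} (field N F X i)"
      by (simp add: integral_unique)
    have "norm (integral {0..s} (field N F X i)) \<le> integral {0..s} (g i)"
      unfolding g_def
      by (intro integral_norm_bound_integral integrable_continuous_interval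
          continuous_on_norm continuous_on_subset[OF fc[OF i]]) auto
    then show ?thesis using eq norm_triangle_ineq[of "V i 0"] by (metis add_le_cancel_left order_trans)
  qed
  have K0: "norm (V i 0) \<le> Kvel N V 0" if "i \<in> I" for i
  proof -
    have fin: "finite ({0..0::real} \<times> {1..N})" by auto
    show ?thesis unfolding Kvel_def
      by (rule cSUP_upper2[where x="(0,i)"]) (use that fin I_def in auto)
  qed
  have Gbound: "integral {0..t} (g i) \<le> e * Ebar N F X t + integral {0..t} (\<lambda>s. Ebar N F X s)"
    if i: "i \<in> I" for i
  proof (cases "e > 0")
    case True
    interpret EBloc e g I
      by unfold_locales (use True gc gnn N in \<open>auto simp: I_def\<close>)
    show ?thesis unfolding Ebar_eq using main[OF i t] by simp
  next
    case False
    have Np: "real N powr (1 / (2 * real DIM('a))) > 0" using N by auto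
    have allz: "X j 0 = 0" if j: "j \<in> I" for j
    proof -
      have "norm (X j 0) \<le> (SUP i\<in>{1..N}. norm (X i 0))"
        using j by (intro cSUP_upper) (auto simp: I_def)
      moreover have "(SUP i\<in>{1..N}. norm (X i 0)) \<le> 0"
        using False Np unfolding e_def eps_def by (simp add: divide_le_0_iff not_less)
      ultimately have "norm (X j 0) \<le> 0" by linarith
      then show ?thesis by simp
    qed
    have N1: "N = 1"
    proof (rule ccontr)
      assume "N \<noteq> 1"
      then have "1 \<in> I" "2 \<in> I" using N by (auto simp: I_def)
      then show False using coll[of 1 2 0] allz by auto
    qed
    have ge: "e \<ge> 0"
    proof -
      have "norm (X 1 0) \<le> (SUP i\<in>{1..N}. norm (X i 0))"
        using N by (intro cSUP_upper) auto
      then have "0 \<le> (SUP i\<in>{1..N}. norm (X i 0))" using norm_ge_zero order_trans by blast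
      then show ?thesis unfolding e_def eps_def using Np by auto
    qed
    then have e0: "e = 0" using False by auto
    have "g i = (\<lambda>_. 0)" using i N1 unfolding g_def field_def I_def by auto
    then have G0: "integral {0..t} (g i) = 0" by simp
    have "Ebar N F X s = 0" if "s \<in> {0..t}" for s
    proof -
      have "{0..s} \<times> I \<noteq> {}" using that N1 by (auto simp: I_def)
      then show ?thesis using that unfolding Ebar_eq EB_def e0 by simp
    qed
    then have "integral {0..t} (\<lambda>s. Ebar N F X s) = 0"
    proof -
      assume h: "\<And>s. s \<in> {0..t} \<Longrightarrow> Ebar N F X s = 0"
      have "integral {0..t} (\<lambda>s. Ebar N F X s) = integral {0..t} (\<lambda>_. 0::real)"
        by (rule integral_cong) (rule h)
      then show ?thesis by simp
    qed
    then show ?thesis using G0 e0 by simp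
  qed
  have "Kvel N V t \<le> Kvel N V 0 + (e * Ebar N F X t + integral {0..t} (\<lambda>s. Ebar N F X s))"
    unfolding Kvel_def[of N V t]
  proof (rule cSUP_least)
    show "{0..t} \<times> {1..N} \<noteq> {}" using t N by auto
    fix p assume p: "p \<in> {0..t} \<times> {1..N}"
    then have i: "snd p \<in> I" and s: "0 \<le> fst p" "fst p \<le> t" by (auto simp: I_def)
    have "integral {0..fst p} (g (snd p)) \<le> integral {0..t} (g (snd p))"
      using s i by (intro integral_subset_le gint) (auto simp: gnn)
    then show "norm (V (snd p) (fst p)) \<le> Kvel N V 0 + (e * Ebar N F X t + integral {0..t} (\<lambda>s. Ebar N F X s))"
      using Vb[OF i s(1)] K0[OF i] Gbound[OF i] by linarith
  qed
  then show "Kvel N V t \<le> Kvel N V 0 + 1 * t + 1 * eps N X * Ebar N F X t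
                          + 1 * integral {0..t} (\<lambda>s. Ebar N F X s)"
    using t unfolding e_def by simp
qed

end
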